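(* For every partition $\mu$ of $n$, the $\mathbb{Q}$-linear extension $\Phi: M^\mu\to \operatorname{span}_{\mathbb{Q}}\mathcal{A}(\mu)$ is an isomorphism of graded vector spaces; equivalently, $\Phi$ restricts to a degree-preserving bijection from the set of row-strict fillings of $\mu$ onto $\mathcal{A}(\mu)$.
   Context: A row-strict filling of a partition $\mu$ of $n$ (Young diagram, left-justified rows, rows top to bottom) places $1,\dots,n$ bijectively in its boxes, increasing left to right along rows. Dimension pairs (with $h(j)=j$): $(a,b)$ is a dimension pair of $T$ if $b>a$; $b$ lies in the same column as $a$ strictly below it or in a column strictly left of $a$'s; and if the box immediately right of $a$ exists and contains $c$, then $b\le c$. $D^T_j$ is the set of dimension pairs $(a,j)$; $\Phi(T)=\prod_{j=2}^n x_j^{|D^T_j|}$; $\mathcal{A}(\mu)$ is the set of all $\Phi(T)$. $M^\mu$ is the formal $\mathbb{Q}$-span of the row-strict fillings of $\mu$, graded by number of dimension pairs; $\operatorname{span}\mathcal{A}(\mu)$ is graded by polynomial degree. *)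

theory Defs
  imports Complex_Main
begin

text \<open>A partition of n: a weakly decreasing list of positive parts summing to n.
  Row r (0-indexed, top to bottom) has length mu!r.\<close>
definition is_partition :: "nat \<Rightarrow> nat list \<Rightarrow> bool" where
  "is_partition n mu \<longleftrightarrow> sum_list mu = n \<and> (\<forall>x\<in>set mu. 0 < x) \<and> sorted_wrt (\<ge>) mu"

definition boxes :: "nat list \<Rightarrow> (nat \<times> nat) set" where
  "boxes mu = {(r, c). r < length mu \<and> c < mu ! r}"

definition row_strict_fillings :: "nat \<Rightarrow> nat list \<Rightarrow> (nat \<times> nat \<Rightarrow> nat) set" where
  "row_strict_fillings n mu =
     {T. bij_betw T (boxes mu) {1..n}
         \<and> (\<forall>p. p \<notin> boxes mu \<longrightarrow> T p = 0)
         \<and> (\<forall>r c c'. (r, c') \<in> boxes mu \<longrightarrow> c < c' \<longrightarrow> T (r, c) < T (r, c'))}"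

text \<open>Dimension pair (a,b) of T (with h(j) = j).\<close>
definition dim_pair :: "nat list \<Rightarrow> (nat \<times> nat \<Rightarrow> nat) \<Rightarrow> nat \<Rightarrow> nat \<Rightarrow> bool" where
  "dim_pair mu T a b \<longleftrightarrow>
     b > a \<and>
     (\<exists>r c r' c'. (r, c) \<in> boxes mu \<and> (r', c') \<in> boxes mu \<and> T (r, c) = a \<and> T (r', c') = b
        \<and> ((c' = c \<and> r' > r) \<or> c' < c)
        \<and> ((r, Suc c) \<in> boxes mu \<longrightarrow> b \<le> T (r, Suc c)))"

definition dim_pairs :: "nat list \<Rightarrow> (nat \<times> nat \<Rightarrow> nat) \<Rightarrow> (nat \<times> nat) set" where
  "dim_pairs mu T = {(a, b). dim_pair mu T a b}"

definition D_set :: "nat list \<Rightarrow> (nat \<times> nat \<Rightarrow> nat) \<Rightarrow> nat \<Rightarrow> (nat \<times> nat) set" where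
  "D_set mu T j = {(a, b). dim_pair mu T a b \<and> b = j}"

text \<open>Monomials in x_2,...,x_n are represented by their exponent vectors
  (nat \<Rightarrow> nat, exponent of x_j at j, zero outside {2..n}).\<close>
type_synonym monomial = "nat \<Rightarrow> nat"

definition Phi :: "nat \<Rightarrow> nat list \<Rightarrow> (nat \<times> nat \<Rightarrow> nat) \<Rightarrow> monomial" where
  "Phi n mu T = (\<lambda>j. if 2 \<le> j \<and> j \<le> n then card (D_set mu T j) else 0)"

definition A_set :: "nat \<Rightarrow> nat list \<Rightarrow> monomial set" where
  "A_set n mu = Phi n mu ` row_strict_fillings n mu"

definition mono_deg :: "nat \<Rightarrow> monomial \<Rightarrow> nat" where
  "mono_deg n m = (\<Sum>j = 2..n. m j)"

text \<open>M^mu: formal Q-span of the fillings = coefficient functions supported on the fillings.\<close>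
definition M_space :: "nat \<Rightarrow> nat list \<Rightarrow> ((nat \<times> nat \<Rightarrow> nat) \<Rightarrow> rat) set" where
  "M_space n mu = {c. \<forall>T. T \<notin> row_strict_fillings n mu \<longrightarrow> c T = 0}"

text \<open>Polynomials in x_2..x_n are coefficient functions on monomials; the span of the
  (linearly independent) monomials in A(mu) consists of the polynomials supported on A(mu).\<close>
definition span_A :: "nat \<Rightarrow> nat list \<Rightarrow> (monomial \<Rightarrow> rat) set" where
  "span_A n mu = {p. \<forall>m. m \<notin> A_set n mu \<longrightarrow> p m = 0}"

definition Phi_lin :: "nat \<Rightarrow> nat list \<Rightarrow> ((nat \<times> nat \<Rightarrow> nat) \<Rightarrow> rat) \<Rightarrow> (monomial \<Rightarrow> rat)" where
  "Phi_lin n mu c = (\<lambda>m. \<Sum>T\<in>row_strict_fillings n mu. if Phi n mu T = m then c T else 0)"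

definition M_homog :: "nat \<Rightarrow> nat list \<Rightarrow> nat \<Rightarrow> ((nat \<times> nat \<Rightarrow> nat) \<Rightarrow> rat) set" where
  "M_homog n mu d = {c \<in> M_space n mu. \<forall>T. c T \<noteq> 0 \<longrightarrow> card (dim_pairs mu T) = d}"

definition A_homog :: "nat \<Rightarrow> nat list \<Rightarrow> nat \<Rightarrow> (monomial \<Rightarrow> rat) set" where
  "A_homog n mu d = {p \<in> span_A n mu. \<forall>m. p m \<noteq> 0 \<longrightarrow> mono_deg n m = d}"

end

theory Submission
  imports Defs
begin

lemma boxes_Sigma: "boxes mu = Sigma {..<length mu} (\<lambda>r. {..<mu!r})"
  unfolding boxes_def by auto

lemma finite_boxes: "finite (boxes mu)"
  unfolding boxes_Sigma by auto

lemma finite_rsf: "finite (row_strict_fillings n mu)"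
proof -
  have "row_strict_fillings n mu \<subseteq>
     {f. \<forall>x. (x \<in> boxes mu \<longrightarrow> f x \<in> {1..n}) \<and> (x \<notin> boxes mu \<longrightarrow> f x = 0)}"
    unfolding row_strict_fillings_def bij_betw_def by auto
  moreover have "finite {f. \<forall>x. (x \<in> boxes mu \<longrightarrow> f x \<in> {1..n}) \<and> (x \<notin> boxes mu \<longrightarrow> f x = (0::nat))}"
    by (rule finite_set_of_finite_funs) (auto simp: finite_boxes)
  ultimately show ?thesis by (rule finite_subset)
qed

lemma downclosed_eq:
  fixes S :: "nat set"
  assumes "finite S" "\<And>x y. x \<in> S \<Longrightarrow> y < x \<Longrightarrow> y \<in> S"
  shows "S = {..<card S}"
proof (cases "S = {}")
  case True then show ?thesis by simp
next
  case False
  have "S = {..Max S}"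
  proof
    show "S \<subseteq> {..Max S}" using assms(1) by auto
    show "{..Max S} \<subseteq> S"
    proof
      fix y assume "y \<in> {..Max S}"
      then have "y \<le> Max S" by simp
      moreover have "Max S \<in> S" using assms(1) False by simp
      ultimately show "y \<in> S" using assms(2)[of "Max S" y] by (cases "y = Max S") auto
    qed
  qed
  then show ?thesis by (metis card_atMost lessThan_Suc_atMost)
qed

definition rk :: "(nat \<Rightarrow> nat) \<Rightarrow> nat \<Rightarrow> nat \<Rightarrow> nat set" where
  "rk l N s = {r. r < N \<and> (l s < l r \<or> (l r = l s \<and> r < s))}"

lemma rk_less:
  assumes "l s1 < l s2 \<or> (l s1 = l s2 \<and> s2 < s1)" "s2 < N"
  shows "card (rk l N s2) < card (rk l N s1)"
proof -
  have "rk l N s2 \<subset> rk l N s1"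
  proof
    show "rk l N s2 \<subseteq> rk l N s1" using assms unfolding rk_def by auto
    show "rk l N s2 \<noteq> rk l N s1"
    proof
      assume "rk l N s2 = rk l N s1"
      moreover have "s2 \<in> rk l N s1" using assms unfolding rk_def by auto
      moreover have "s2 \<notin> rk l N s2" unfolding rk_def by auto
      ultimately show False by simp
    qed
  qed
  moreover have "finite (rk l N s1)" unfolding rk_def by simp
  ultimately show ?thesis using psubset_card_mono by blast
qed

lemma rk_inj:
  assumes "card (rk l N s1) = card (rk l N s2)" "s1 < N" "s2 < N"
  shows "s1 = s2"
proof (rule ccontr)
  assume ne: "s1 \<noteq> s2"
  show False
  proof (cases "l s1 < l s2 \<or> (l s1 = l s2 \<and> s2 < s1)")
    case True then show ?thesis using rk_less[OF True assms(3)] assms(1) by simp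
  next
    case False
    then have "l s2 < l s1 \<or> (l s2 = l s1 \<and> s1 < s2)" using ne by auto
    from rk_less[OF this assms(2)] show ?thesis using assms(1) by simp
  qed
qed

definition ell :: "nat list \<Rightarrow> (nat \<times> nat \<Rightarrow> nat) \<Rightarrow> nat \<Rightarrow> nat \<Rightarrow> nat" where
  "ell mu T j r = card {c. (r, c) \<in> boxes mu \<and> T (r, c) \<le> j}"

locale rsf =
  fixes n :: nat and mu :: "nat list" and T :: "nat \<times> nat \<Rightarrow> nat"
  assumes rsf: "T \<in> row_strict_fillings n mu"
begin

lemma outside: "p \<notin> boxes mu \<Longrightarrow> T p = 0"
  using rsf unfolding row_strict_fillings_def by (cases p) auto

lemma inj: "inj_on T (boxes mu)" and img: "T ` boxes mu = {1..n}"
  and mono: "(r, c') \<in> boxes mu \<Longrightarrow> c < c' \<Longrightarrow> T (r, c) < T (r, c')"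
  using rsf unfolding row_strict_fillings_def bij_betw_def by auto

lemma box_left: "(r, c') \<in> boxes mu \<Longrightarrow> c \<le> c' \<Longrightarrow> (r, c) \<in> boxes mu"
  unfolding boxes_def by auto

lemma val: "p \<in> boxes mu \<Longrightarrow> 1 \<le> T p \<and> T p \<le> n"
  using img by auto

lemma exists_pos: "1 \<le> j \<Longrightarrow> j \<le> n \<Longrightarrow> \<exists>s c. (s, c) \<in> boxes mu \<and> T (s, c) = j"
  using img by (metis atLeastAtMost_iff imageE prod.exhaust)

lemma same_val: "p \<in> boxes mu \<Longrightarrow> q \<in> boxes mu \<Longrightarrow> T p = T q \<Longrightarrow> p = q"
  using inj by (meson inj_onD)

lemma mono_rev: "(r, c) \<in> boxes mu \<Longrightarrow> (r, c') \<in> boxes mu \<Longrightarrow> T (r, c) < T (r, c') \<Longrightarrow> c < c'"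
  by (metis mono linorder_neqE_nat order_less_asym)

lemma L_eq: "{c. (r, c) \<in> boxes mu \<and> T (r, c) \<le> j} = {..<ell mu T j r}"
  unfolding ell_def
proof (rule downclosed_eq)
  show "finite {c. (r, c) \<in> boxes mu \<and> T (r, c) \<le> j}"
    by (rule finite_subset[of _ "{..<mu!r}"]) (auto simp: boxes_def)
  fix x y assume "x \<in> {c. (r, c) \<in> boxes mu \<and> T (r, c) \<le> j}" "y < x"
  then have h: "(r,x) \<in> boxes mu" "T (r,x) \<le> j" by auto
  have "(r,y) \<in> boxes mu" using box_left[OF h(1)] \<open>y<x\<close> by simp
  moreover have "T (r,y) < T (r,x)" using mono[OF h(1) \<open>y<x\<close>] .
  ultimately show "y \<in> {c. (r, c) \<in> boxes mu \<and> T (r, c) \<le> j}" using h(2) by simp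
qed

lemma mem_L: "(r, c) \<in> boxes mu \<and> T (r, c) \<le> j \<longleftrightarrow> c < ell mu T j r"
  using L_eq[of r j] by (auto simp: set_eq_iff)

lemma pos_ell:
  assumes "(s, c) \<in> boxes mu" "T (s, c) = j"
  shows "ell mu T j s = Suc c"
proof -
  have "c < ell mu T j s" using mem_L assms by auto
  moreover have "\<not> Suc c < ell mu T j s"
  proof
    assume "Suc c < ell mu T j s"
    then have "(s, Suc c) \<in> boxes mu" "T (s, Suc c) \<le> j" using mem_L by blast+
    moreover have "T (s, c) < T (s, Suc c)" using mono calculation by auto
    ultimately show False using assms by simp
  qed
  ultimately show ?thesis by simp
qed

lemma ell_pred:
  assumes "(s, c) \<in> boxes mu" "T (s, c) = j"
  shows "ell mu T (j - 1) r = (if r = s then ell mu T j r - 1 else ell mu T j r)"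
proof -
  have j1: "1 \<le> j" using val assms by auto
  have eq: "{c. (r, c) \<in> boxes mu \<and> T (r, c) \<le> j - 1}
        = {c. (r, c) \<in> boxes mu \<and> T (r, c) \<le> j} - {c. (r, c) \<in> boxes mu \<and> T (r, c) = j}"
    using j1 by auto
  show ?thesis
  proof (cases "r = s")
    case True
    have "{c. (r, c) \<in> boxes mu \<and> T (r, c) = j} = {c}"
    proof
      show "{c} \<subseteq> {c. (r, c) \<in> boxes mu \<and> T (r, c) = j}" using assms True by simp
      show "{c. (r, c) \<in> boxes mu \<and> T (r, c) = j} \<subseteq> {c}"
      proof
        fix x assume "x \<in> {c. (r, c) \<in> boxes mu \<and> T (r, c) = j}"
        then have x: "(r, x) \<in> boxes mu" "T (r, x) = j" by auto
        have "(r, x) = (s, c)" by (rule same_val[OF x(1) assms(1)]) (simp add: x(2) assms(2))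
        then show "x \<in> {c}" by simp
      qed
    qed
    moreover have "finite {c. (r, c) \<in> boxes mu \<and> T (r, c) \<le> j}"
      unfolding L_eq by simp
    moreover have "c \<in> {c. (r, c) \<in> boxes mu \<and> T (r, c) \<le> j}" using assms True by simp
    ultimately show ?thesis unfolding ell_def eq using True
      by (simp add: card_Diff_singleton)
  next
    case False
    have "{c. (r, c) \<in> boxes mu \<and> T (r, c) = j} = {}"
    proof (rule ccontr)
      assume "{c. (r, c) \<in> boxes mu \<and> T (r, c) = j} \<noteq> {}"
      then obtain x where x: "(r, x) \<in> boxes mu" "T (r, x) = j" by auto
      have "(r, x) = (s, c)" by (rule same_val[OF x(1) assms(1)]) (simp add: x(2) assms(2))
      then show False using False by simp
    qed
    then show ?thesis using False by (simp only: ell_def eq Diff_empty if_False)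
  qed
qed

lemma ell_n: "r < length mu \<Longrightarrow> ell mu T n r = mu ! r"
proof -
  assume "r < length mu"
  then have "{c. (r, c) \<in> boxes mu \<and> T (r, c) \<le> n} = {..<mu!r}"
    using val unfolding boxes_def by auto
  then show ?thesis unfolding ell_def by simp
qed

lemma dim_pair_range: "dim_pair mu T a b \<Longrightarrow> 1 \<le> a \<and> a < b \<and> b \<le> n"
  unfolding dim_pair_def using val by fastforce

lemma D_card:
  assumes s: "(s, c') \<in> boxes mu" "T (s, c') = j"
  shows "card (D_set mu T j) = card (rk (ell mu T j) (length mu) s)"
proof -
  let ?l = "ell mu T j"
  let ?R = "rk ?l (length mu) s"
  let ?g = "\<lambda>r. T (r, ?l r - 1)"
  have ls: "?l s = Suc c'" using pos_ell s .
  have Deq: "D_set mu T j = (\<lambda>a. (a, j)) ` {a. dim_pair mu T a j}"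
    unfolding D_set_def by auto
  have cD: "card (D_set mu T j) = card {a. dim_pair mu T a j}"
    unfolding Deq by (rule card_image) (auto simp: inj_on_def)
  have set_eq: "{a. dim_pair mu T a j} = ?g ` ?R"
  proof
    show "{a. dim_pair mu T a j} \<subseteq> ?g ` ?R"
    proof
      fix a assume "a \<in> {a. dim_pair mu T a j}"
      then obtain r c r2 c2 where h: "j > a" "(r, c) \<in> boxes mu" "(r2, c2) \<in> boxes mu"
        "T (r, c) = a" "T (r2, c2) = j" "(c2 = c \<and> r2 > r) \<or> c2 < c"
        "(r, Suc c) \<in> boxes mu \<longrightarrow> j \<le> T (r, Suc c)"
        unfolding dim_pair_def by blast
      have eqc': "(r2, c2) = (s, c')" by (intro same_val[OF h(3) s(1)]) (simp add: h(5) s(2))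
      have rne: "r \<noteq> s"
      proof
        assume "r = s"
        then have "c < c'" using mono_rev h eqc' by auto
        then show False using h(6) eqc' \<open>r = s\<close> by auto
      qed
      have cl: "c < ?l r" using mem_L[of r c j] h(1,2,4) by auto
      have lr: "?l r = Suc c"
      proof (rule ccontr)
        assume "?l r \<noteq> Suc c"
        then have "Suc c < ?l r" using cl by simp
        then have b: "(r, Suc c) \<in> boxes mu" "T (r, Suc c) \<le> j" using mem_L by blast+
        then have "T (r, Suc c) = j" using h(7) by simp
        then have "(r, Suc c) = (s, c')" by (intro same_val[OF b(1) s(1)]) (simp add: s(2))
        then show False using rne by simp
      qed
      have "r < length mu" using h(2) unfolding boxes_def by auto
      moreover have "?l s < ?l r \<or> (?l r = ?l s \<and> r < s)"
        using h(6) eqc' ls lr by auto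
      ultimately have "r \<in> ?R" unfolding rk_def by auto
      moreover have "a = ?g r" using lr h(4) by simp
      ultimately show "a \<in> ?g ` ?R" by blast
    qed
  next
    show "?g ` ?R \<subseteq> {a. dim_pair mu T a j}"
    proof
      fix a assume "a \<in> ?g ` ?R"
      then obtain r where r: "r \<in> ?R" "a = ?g r" by blast
      have rl: "r < length mu" "?l s < ?l r \<or> (?l r = ?l s \<and> r < s)"
        using r(1) unfolding rk_def by auto
      have rne: "r \<noteq> s" using rl by auto
      have lr1: "?l r \<ge> 1" using rl ls by auto
      have b: "(r, ?l r - 1) \<in> boxes mu" "T (r, ?l r - 1) \<le> j"
        using mem_L[of r "?l r - 1" j] lr1 by auto
      have "T (r, ?l r - 1) \<noteq> j" using same_val[OF b(1) s(1)] s(2) rne by auto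
      then have alt: "a < j" using b r(2) by simp
      have nb: "(r, Suc (?l r - 1)) \<in> boxes mu \<longrightarrow> j \<le> T (r, Suc (?l r - 1))"
      proof
        assume bb: "(r, Suc (?l r - 1)) \<in> boxes mu"
        have "\<not> Suc (?l r - 1) < ?l r" using lr1 by simp
        then have "\<not> T (r, Suc (?l r - 1)) \<le> j" using mem_L bb by blast
        then show "j \<le> T (r, Suc (?l r - 1))" by simp
      qed
      have col: "(c' = ?l r - 1 \<and> s > r) \<or> c' < ?l r - 1"
        using rl ls lr1 by auto
      show "a \<in> {a. dim_pair mu T a j}"
        unfolding dim_pair_def using alt b(1) s r(2) col nb by blast
    qed
  qed
  have inj_g: "inj_on ?g ?R"
  proof
    fix r1 r2 assume "r1 \<in> ?R" "r2 \<in> ?R" "?g r1 = ?g r2"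
    moreover have "(r, ?l r - 1) \<in> boxes mu" if "r \<in> ?R" for r
    proof -
      have "?l r \<ge> 1" using that ls unfolding rk_def by auto
      then show ?thesis using mem_L[of r "?l r - 1" j] by auto
    qed
    ultimately show "r1 = r2" using same_val by blast
  qed
  show ?thesis using cD set_eq card_image[OF inj_g] by simp
qed

lemma D_empty1: "D_set mu T 1 = {}"
  unfolding D_set_def using dim_pair_range by fastforce

lemma dim_pairs_eq: "dim_pairs mu T = (\<Union>j\<in>{2..n}. D_set mu T j)"
  unfolding dim_pairs_def D_set_def using dim_pair_range by fastforce

lemma deg: "mono_deg n (Phi n mu T) = card (dim_pairs mu T)"
proof -
  have fin: "finite (D_set mu T j)" for j
  proof (rule finite_subset[of _ "{1..n} \<times> {j}"])
    show "D_set mu T j \<subseteq> {1..n} \<times> {j}" unfolding D_set_def by (auto dest!: dim_pair_range)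
  qed simp
  have "card (dim_pairs mu T) = (\<Sum>j\<in>{2..n}. card (D_set mu T j))"
    unfolding dim_pairs_eq
  proof (rule card_UN_disjoint)
    show "\<forall>i\<in>{2..n}. finite (D_set mu T i)" using fin by simp
    show "\<forall>i\<in>{2..n}. \<forall>j\<in>{2..n}. i \<noteq> j \<longrightarrow> D_set mu T i \<inter> D_set mu T j = {}"
      by (auto simp: D_set_def)
  qed simp
  moreover have "mono_deg n (Phi n mu T) = (\<Sum>j\<in>{2..n}. card (D_set mu T j))"
    unfolding mono_deg_def Phi_def by simp
  ultimately show ?thesis by simp
qed

end

lemma Phi_inj: "inj_on (Phi n mu) (row_strict_fillings n mu)"
proof
  fix T1 T2 assume T1: "T1 \<in> row_strict_fillings n mu" and T2: "T2 \<in> row_strict_fillings n mu"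
    and eq: "Phi n mu T1 = Phi n mu T2"
  interpret A: rsf n mu T1 using T1 by unfold_locales
  interpret B: rsf n mu T2 using T2 by unfold_locales
  have Dc: "card (D_set mu T1 j) = card (D_set mu T2 j)" if "1 \<le> j" "j \<le> n" for j
  proof (cases "j = 1")
    case True then show ?thesis using A.D_empty1 B.D_empty1 by simp
  next
    case False
    then have "Phi n mu T1 j = card (D_set mu T1 j)" "Phi n mu T2 j = card (D_set mu T2 j)"
      using that unfolding Phi_def by auto
    then show ?thesis using eq by simp
  qed
  have rows: "s1 = s2"
    if "1 \<le> j" "j \<le> n" "\<forall>r<length mu. ell mu T1 j r = ell mu T2 j r"
       "(s1, c1) \<in> boxes mu" "T1 (s1, c1) = j" "(s2, c2) \<in> boxes mu" "T2 (s2, c2) = j"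
     for j s1 c1 s2 c2
  proof -
    have sl: "s1 < length mu" "s2 < length mu" using that(4,6) unfolding boxes_def by auto
    have "rk (ell mu T1 j) (length mu) s1 = rk (ell mu T2 j) (length mu) s1"
      using that(3) sl unfolding rk_def by auto
    moreover have "rk (ell mu T1 j) (length mu) s2 = rk (ell mu T2 j) (length mu) s2"
      using that(3) sl unfolding rk_def by auto
    moreover have "card (rk (ell mu T1 j) (length mu) s1) = card (rk (ell mu T2 j) (length mu) s2)"
      using A.D_card[OF that(4,5)] B.D_card[OF that(6,7)] Dc[OF that(1,2)] by simp
    ultimately have "card (rk (ell mu T2 j) (length mu) s1) = card (rk (ell mu T2 j) (length mu) s2)"
      by simp
    then show ?thesis using rk_inj sl by blast
  qed
  have ells: "\<forall>r<length mu. ell mu T1 (n - k) r = ell mu T2 (n - k) r" if "k \<le> n" for k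
    using that
  proof (induction k)
    case 0 then show ?case using A.ell_n B.ell_n by simp
  next
    case (Suc k)
    let ?j = "n - k"
    have j: "1 \<le> ?j" "?j \<le> n" using Suc.prems by auto
    obtain s1 c1 where p1: "(s1, c1) \<in> boxes mu" "T1 (s1, c1) = ?j" using A.exists_pos j by blast
    obtain s2 c2 where p2: "(s2, c2) \<in> boxes mu" "T2 (s2, c2) = ?j" using B.exists_pos j by blast
    have IH: "\<forall>r<length mu. ell mu T1 ?j r = ell mu T2 ?j r" using Suc by simp
    have "s1 = s2" using rows[OF j IH p1 p2] .
    moreover have "n - Suc k = ?j - 1" by simp
    ultimately show ?case using A.ell_pred[OF p1] B.ell_pred[OF p2] IH by simp
  qed
  have ellj: "\<forall>r<length mu. ell mu T1 j r = ell mu T2 j r" if "j \<le> n" for j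
    using ells[of "n - j"] that by simp
  show "T1 = T2"
  proof
    fix p
    show "T1 p = T2 p"
    proof (cases "p \<in> boxes mu")
      case False then show ?thesis using A.outside B.outside by simp
    next
      case True
      obtain r c where p: "p = (r, c)" by (cases p)
      let ?j = "T1 (r, c)"
      have j: "1 \<le> ?j" "?j \<le> n" using A.val True p by auto
      obtain s2 c2 where p2: "(s2, c2) \<in> boxes mu" "T2 (s2, c2) = ?j" using B.exists_pos j by blast
      have rr: "r = s2" using rows[OF j ellj[OF j(2)] _ _ p2] True p by simp
      have "Suc c = ell mu T1 ?j r" using A.pos_ell True p by simp
      also have "\<dots> = ell mu T2 ?j r" using ellj[OF j(2)] True p unfolding boxes_def by auto
      also have "\<dots> = Suc c2" using B.pos_ell[OF p2] rr by simp
      finally have "c = c2" by simp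
      then show ?thesis using p p2 rr by simp
    qed
  qed
qed

lemma Phi_lin_val:
  assumes "T0 \<in> row_strict_fillings n mu"
  shows "Phi_lin n mu c (Phi n mu T0) = c T0"
proof -
  have "Phi_lin n mu c (Phi n mu T0)
      = (\<Sum>T\<in>row_strict_fillings n mu. if T = T0 then c T else 0)"
    unfolding Phi_lin_def
  proof (rule sum.cong)
    fix T assume T: "T \<in> row_strict_fillings n mu"
    have "Phi n mu T = Phi n mu T0 \<longleftrightarrow> T = T0"
      using inj_onD[OF Phi_inj _ T assms] by blast
    then show "(if Phi n mu T = Phi n mu T0 then c T else 0) = (if T = T0 then c T else 0)"
      by simp
  qed simp
  also have "\<dots> = c T0" using assms finite_rsf by simp
  finally show ?thesis .
qed

lemma Phi_lin_out:
  assumes "m \<notin> A_set n mu"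
  shows "Phi_lin n mu c m = 0"
  using assms unfolding Phi_lin_def A_set_def by (auto intro!: sum.neutral)

theorem mainTheorem9:
  fixes n :: nat and mu :: "nat list"
  assumes "is_partition n mu"
  shows "(\<forall>d. bij_betw (Phi_lin n mu) (M_homog n mu d) (A_homog n mu d))
       \<and> bij_betw (Phi_lin n mu) (M_space n mu) (span_A n mu)
       \<and> bij_betw (Phi n mu) (row_strict_fillings n mu) (A_set n mu)
       \<and> (\<forall>T\<in>row_strict_fillings n mu. mono_deg n (Phi n mu T) = card (dim_pairs mu T))"
proof -
  let ?F = "row_strict_fillings n mu"
  have degF: "\<forall>T\<in>?F. mono_deg n (Phi n mu T) = card (dim_pairs mu T)"
    using rsf.deg by (simp add: rsf_def)
  have bijP: "bij_betw (Phi n mu) ?F (A_set n mu)"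
    unfolding bij_betw_def A_set_def using Phi_inj by simp
  have injM: "inj_on (Phi_lin n mu) (M_space n mu)"
  proof
    fix c1 c2 assume c: "c1 \<in> M_space n mu" "c2 \<in> M_space n mu" "Phi_lin n mu c1 = Phi_lin n mu c2"
    show "c1 = c2"
    proof
      fix T show "c1 T = c2 T"
      proof (cases "T \<in> ?F")
        case True then show ?thesis using Phi_lin_val[OF True, of c1] Phi_lin_val[OF True, of c2] c(3) by simp
      next
        case False then show ?thesis using c(1,2) unfolding M_space_def by simp
      qed
    qed
  qed
  define pre where "pre p = (\<lambda>T. if T \<in> ?F then p (Phi n mu T) else (0::rat))" for p :: "monomial \<Rightarrow> rat"
  have pre_M: "pre p \<in> M_space n mu" for p unfolding pre_def M_space_def by simp
  have pre_img: "Phi_lin n mu (pre p) = p" if "p \<in> span_A n mu" for p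
  proof
    fix m show "Phi_lin n mu (pre p) m = p m"
    proof (cases "m \<in> A_set n mu")
      case True
      then obtain T where "T \<in> ?F" "m = Phi n mu T" unfolding A_set_def by auto
      then show ?thesis using Phi_lin_val[of T n mu "pre p"] unfolding pre_def by simp
    next
      case False then show ?thesis using Phi_lin_out that unfolding span_A_def by simp
    qed
  qed
  have img_span: "Phi_lin n mu c \<in> span_A n mu" for c
    unfolding span_A_def using Phi_lin_out by blast
  have bijM: "bij_betw (Phi_lin n mu) (M_space n mu) (span_A n mu)"
    unfolding bij_betw_def
  proof
    show "inj_on (Phi_lin n mu) (M_space n mu)" by (rule injM)
    show "Phi_lin n mu ` M_space n mu = span_A n mu"
      using img_span pre_img pre_M by (metis image_eqI subsetI subset_antisym image_subsetI)
  qed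
  have bijH: "bij_betw (Phi_lin n mu) (M_homog n mu d) (A_homog n mu d)" for d
    unfolding bij_betw_def
  proof
    show "inj_on (Phi_lin n mu) (M_homog n mu d)"
      using injM by (rule inj_on_subset) (auto simp: M_homog_def)
    show "Phi_lin n mu ` M_homog n mu d = A_homog n mu d"
    proof
      show "Phi_lin n mu ` M_homog n mu d \<subseteq> A_homog n mu d"
      proof
        fix p assume "p \<in> Phi_lin n mu ` M_homog n mu d"
        then obtain c where c: "c \<in> M_homog n mu d" "p = Phi_lin n mu c" by blast
        have "mono_deg n m = d" if "p m \<noteq> 0" for m
        proof -
          have "m \<in> A_set n mu" using that c Phi_lin_out by blast
          then obtain T where T: "T \<in> ?F" "m = Phi n mu T" unfolding A_set_def by auto
          then have "c T \<noteq> 0" using that c Phi_lin_val by metis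
          then have "card (dim_pairs mu T) = d" using c unfolding M_homog_def by auto
          then show ?thesis using degF T by simp
        qed
        then show "p \<in> A_homog n mu d" unfolding A_homog_def using c img_span by auto
      qed
    next
      show "A_homog n mu d \<subseteq> Phi_lin n mu ` M_homog n mu d"
      proof
        fix p assume p: "p \<in> A_homog n mu d"
        have "pre p \<in> M_homog n mu d"
          unfolding M_homog_def using pre_M p degF
          by (auto simp: pre_def A_homog_def split: if_splits)
        moreover have "Phi_lin n mu (pre p) = p" using pre_img p unfolding A_homog_def by auto
        ultimately show "p \<in> Phi_lin n mu ` M_homog n mu d" by (metis image_eqI)
      qed
    qed
  qed
  show ?thesis using bijH bijM bijP degF by blast
qed

end
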